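(* Let $q=q(h)$ be a function of $h$ with values in $[0,1]$, and let $\Sigma$ be a random fan chosen with respect to $T(h,1-q)$. Then: (1) If $q\prec 1/h^2$ or $1-q\prec 1/h^2$, then with high probability $X(\Sigma)$ is smooth. (2) If $q\succ 1/h^2$ and $1-q\succ 1/h^2$, then with high probability $X(\Sigma)$ is singular. (3) Moreover, for every integer $k>1$: if $1-q\succ 1/h$ and $q\succ 1/h^2$, then with high probability $X(\Sigma)$ has a singularity of index at least $k$, i.e. $\Sigma$ has a $2$-dimensional cone of singularity index at least $k$.
   Context: A ray is a half-line $\rho=\mathbb{R}_{\ge 0}v\subset\mathbb{R}^2$ with $v\in\mathbb{Z}^2\setminus\{0\}$; $u_\rho$ denotes the primitive lattice generator of $\rho$ (the nonzero lattice point on $\rho$ closest to $0$). On $\mathbb{Z}^2$ use the norm $|(x,y)|=\max\{|x|,|y|\}$, and write $|\rho|=|u_\rho|$. Given a finite set $S$ of rays, its completion is the fan $\Sigma$ with $\Sigma(1)=S$ that is maximal with respect to inclusion among all fans (collections of strongly convex rational polyhedral cones closed under faces and meeting in common faces) with set of rays $S$; concretely its $2$-dimensional cones are the cones spanned by pairs of angularly consecutive rays of $S$ whose angle is less than $\pi$. For $h\ge 1$ and $p\in[0,1]$, the distribution $T(h,p)$ on fans is obtained by including each ray $\rho$ with $|\rho|\le h$ independently with probability $p$ and taking the completion of the chosen set of rays. $X(\Sigma)$ denotes the normal toric surface of the fan $\Sigma$. The singularity index of a $2$-dimensional cone spanned by rays $\rho,\tau$ is $|\det(u_\rho,u_\tau)|$;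 $X(\Sigma)$ is smooth iff every $2$-dimensional cone of $\Sigma$ has index $1$, and "$X(\Sigma)$ has a singularity of index at least $k$" means some $2$-dimensional cone has index $\ge k$. For functions $f,g$ of $h$, $f\prec g$ means $\lim_{h\to\infty}f(h)/g(h)=0$, and $f\succ g$ means $g\prec f$. A property holds with high probability if its probability tends to $1$ as $h\to\infty$. *)

theory Defs
  imports "HOL-Probability.Probability"
begin

text \<open>A ray is represented by its primitive lattice generator u = (x,y) in Z^2 with gcd x y = 1.\<close>

definition primitive :: "int \<times> int \<Rightarrow> bool" where
  "primitive u \<longleftrightarrow> gcd (fst u) (snd u) = 1"

definition maxnorm :: "int \<times> int \<Rightarrow> int" where
  "maxnorm u = max \<bar>fst u\<bar> \<bar>snd u\<bar>"

definition rays_upto :: "nat \<Rightarrow> (int \<times> int) set" where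
  "rays_upto h = {u. primitive u \<and> maxnorm u \<le> int h}"

definition det2 :: "int \<times> int \<Rightarrow> int \<times> int \<Rightarrow> int" where
  "det2 u v = fst u * snd v - snd u * fst v"

text \<open>2-dimensional cones of the completion of a set S of rays: pairs (u,v) of
  angularly consecutive rays (v follows u counterclockwise, no ray of S strictly in
  between) whose angle is less than pi (i.e. det(u,v) > 0).\<close>
definition cone2 :: "(int \<times> int) set \<Rightarrow> int \<times> int \<Rightarrow> int \<times> int \<Rightarrow> bool" where
  "cone2 S u v \<longleftrightarrow> u \<in> S \<and> v \<in> S \<and> det2 u v > 0 \<and>
     \<not> (\<exists>w\<in>S. det2 u w > 0 \<and> det2 w v > 0)"

definition sing_index :: "int \<times> int \<Rightarrow> int \<times> int \<Rightarrow> int" where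
  "sing_index u v = \<bar>det2 u v\<bar>"

definition smooth_fan :: "(int \<times> int) set \<Rightarrow> bool" where
  "smooth_fan S \<longleftrightarrow> (\<forall>u v. cone2 S u v \<longrightarrow> sing_index u v = 1)"

definition has_sing_index_ge :: "(int \<times> int) set \<Rightarrow> nat \<Rightarrow> bool" where
  "has_sing_index_ge S k \<longleftrightarrow> (\<exists>u v. cone2 S u v \<and> sing_index u v \<ge> int k)"

text \<open>T(h,p): each ray of norm \<le> h is chosen independently with probability p; the fan is
  the completion of the chosen set, hence determined by the chosen ray set.\<close>
definition T :: "nat \<Rightarrow> real \<Rightarrow> (int \<times> int) set pmf" where
  "T h p = map_pmf (\<lambda>f. {u \<in> rays_upto h. f u})
              (Pi_pmf (rays_upto h) False (\<lambda>_. bernoulli_pmf p))"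

definition prec :: "(nat \<Rightarrow> real) \<Rightarrow> (nat \<Rightarrow> real) \<Rightarrow> bool" where
  "prec f g \<longleftrightarrow> (\<forall>\<^sub>F h in sequentially. g h \<noteq> 0) \<and>
                 ((\<lambda>h. f h / g h) \<longlongrightarrow> 0) sequentially"

definition succ :: "(nat \<Rightarrow> real) \<Rightarrow> (nat \<Rightarrow> real) \<Rightarrow> bool" where
  "succ f g \<longleftrightarrow> prec g f"

definition whp :: "(nat \<Rightarrow> real) \<Rightarrow> bool" where
  "whp P \<longleftrightarrow> (P \<longlongrightarrow> 1) sequentially"

end

theory Submission
  imports Defs
begin

lemma cramer1: "det2 u w * fst z = det2 z w * fst u + det2 u z * fst w"
  by (simp add: det2_def algebra_simps)
lemma cramer2: "det2 u w * snd z = det2 z w * snd u + det2 u z * snd w"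
  by (simp add: det2_def algebra_simps)
lemma det_swap: "det2 v u = - det2 u v"
  by (simp add: det2_def algebra_simps)

lemma prim_dvd:
  assumes "primitive z" "d dvd fst z" "d dvd snd z"
  shows "d dvd 1"
  using assms unfolding primitive_def by (metis gcd_greatest)

lemma det1_prim:
  assumes "det2 u w = 1"
  shows "primitive u" "primitive w"
proof -
  have "gcd (fst u) (snd u) dvd det2 u w"
    unfolding det2_def by (intro dvd_diff dvd_mult2) auto
  then have "gcd (fst u) (snd u) dvd 1" using assms by simp
  then show "primitive u" unfolding primitive_def
    by (simp add: is_unit_gcd coprime_iff_gcd_eq_1)
  have "gcd (fst w) (snd w) dvd det2 u w"
    unfolding det2_def by (intro dvd_diff dvd_mult) auto
  then have "gcd (fst w) (snd w) dvd 1" using assms by simp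
  then show "primitive w" unfolding primitive_def
    by (simp add: is_unit_gcd coprime_iff_gcd_eq_1)
qed

lemma R_smooth: "smooth_fan (rays_upto h)"
  unfolding smooth_fan_def
proof (intro allI impI)
  fix u v assume c: "cone2 (rays_upto h) u v"
  let ?R = "rays_upto h"
  define d where "d = det2 u v"
  have uR: "u \<in> ?R" and vR: "v \<in> ?R" and dpos: "d > 0"
    and nb: "\<not> (\<exists>w\<in>?R. det2 u w > 0 \<and> det2 w v > 0)"
    using c unfolding cone2_def d_def by auto
  have pu: "primitive u" and pv: "primitive v" and nu: "maxnorm u \<le> int h" and nv: "maxnorm v \<le> int h"
    using uR vR unfolding rays_upto_def by auto
  show "sing_index u v = 1"
  proof (rule ccontr)
    assume "sing_index u v \<noteq> 1"
    then have d2: "d \<ge> 2" using dpos unfolding sing_index_def d_def by auto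
    obtain s t where st: "s * fst u + t * snd u = 1"
      using bezout_int[of "fst u" "snd u"] pu unfolding primitive_def by auto
    define z where "z = (- t, s)"
    have dz: "det2 u z = 1" using st unfolding z_def det2_def by (simp add: algebra_simps)
    define r0 where "r0 = det2 z v"
    define c where "c = - (r0 div d)"
    define w where "w = (fst z + c * fst u, snd z + c * snd u)"
    have duw: "det2 u w = 1" using dz unfolding w_def det2_def by (simp add: algebra_simps)
    have "det2 w v = r0 + c * d" unfolding w_def r0_def c_def d_def det2_def by (simp add: algebra_simps)
    also have "\<dots> = r0 mod d" unfolding c_def by (simp add: minus_div_mult_eq_mod algebra_simps)
    finally have dwv: "det2 w v = r0 mod d" .
    have r_ge: "det2 w v \<ge> 0" and r_lt: "det2 w v < d" using dwv dpos by auto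
    have e1: "d * fst w = det2 w v * fst u + fst v"
      using cramer1[of u v w] duw unfolding d_def by simp
    have e2: "d * snd w = det2 w v * snd u + snd v"
      using cramer2[of u v w] duw unfolding d_def by simp
    have rpos: "det2 w v > 0"
    proof (rule ccontr)
      assume "\<not> det2 w v > 0"
      then have "det2 w v = 0" using r_ge by auto
      then have "d dvd fst v" "d dvd snd v" using e1 e2 by (metis add_0 dvd_triv_left mult_zero_left)+
      then have "d dvd 1" using prim_dvd pv by blast
      then show False using d2 by (simp add: zdvd_imp_le)
    qed
    have pw: "primitive w" using det1_prim(2)[OF duw] .
    have hu1: "\<bar>fst u\<bar> \<le> int h" and hu2: "\<bar>snd u\<bar> \<le> int h"
      and hv1: "\<bar>fst v\<bar> \<le> int h" and hv2: "\<bar>snd v\<bar> \<le> int h"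
      using nu nv unfolding maxnorm_def by auto
    have bnd: "\<bar>d * x\<bar> \<le> d * int h" if "\<bar>x1\<bar> \<le> int h" "\<bar>y1\<bar> \<le> int h" "d * x = det2 w v * x1 + y1" for x x1 y1
    proof -
      have "\<bar>d * x\<bar> \<le> det2 w v * \<bar>x1\<bar> + \<bar>y1\<bar>"
        using that(3) rpos by (simp add: abs_mult order.trans[OF abs_triangle_ineq])
      also have "\<dots> \<le> det2 w v * int h + int h"
        using that rpos by (intro add_mono mult_left_mono) auto
      also have "\<dots> \<le> (d - 1) * int h + int h"
        using r_lt by (intro add_mono mult_right_mono) auto
      finally show ?thesis by (simp add: algebra_simps)
    qed
    have "\<bar>fst w\<bar> \<le> int h"
      using bnd[OF hu1 hv1 e1] dpos by (simp add: abs_mult)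
    moreover have "\<bar>snd w\<bar> \<le> int h"
      using bnd[OF hu2 hv2 e2] dpos by (simp add: abs_mult)
    ultimately have "w \<in> ?R" using pw unfolding rays_upto_def maxnorm_def by auto
    then show False using nb duw rpos by auto
  qed
qed

lemma sec_bound:
  fixes a b x y e :: int
  assumes "a \<ge> 1" "0 \<le> b" "b < a" "1 \<le> x" "y * a = x * b + e" "\<bar>e\<bar> \<le> 1"
  shows "-1 \<le> y" "y \<le> x"
proof -
  show "-1 \<le> y"
  proof (rule ccontr)
    assume "\<not> -1 \<le> y"
    then have "y \<le> -2" by auto
    then have "y * a \<le> -2 * a" using assms(1) by (intro mult_right_mono) auto
    moreover have "x * b \<ge> 0" using assms by simp
    ultimately show False using assms by linarith
  qed
  show "y \<le> x"
  proof (rule ccontr)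
    assume "\<not> y \<le> x"
    then have "y \<ge> x + 1" by auto
    then have "y * a \<ge> (x + 1) * a" using assms(1) by (intro mult_right_mono) auto
    moreover have "x * b \<le> x * (a - 1)" using assms by (intro mult_left_mono) auto
    ultimately show False using assms by (auto simp: algebra_simps)
  qed
qed

definition Piv :: "nat \<Rightarrow> int \<Rightarrow> (int \<times> int) set" where
  "Piv h M = {w \<in> rays_upto h. 1 \<le> fst w \<and> M * fst w \<le> int h \<and> 0 \<le> snd w \<and> snd w < fst w}"

definition Unb :: "nat \<Rightarrow> int \<times> int \<Rightarrow> int \<times> int \<Rightarrow> bool" where
  "Unb h w x \<longleftrightarrow> x \<in> rays_upto h \<and> det2 x w = 1 \<and> fst x > int h - fst w"
definition Vnb :: "nat \<Rightarrow> int \<times> int \<Rightarrow> int \<times> int \<Rightarrow> bool" where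
  "Vnb h w x \<longleftrightarrow> x \<in> rays_upto h \<and> det2 w x = 1 \<and> fst x > int h - fst w"

lemma pivot_nbrs:
  assumes "w \<in> Piv h M" "M \<ge> 4"
  shows "\<exists>x. Unb h w x" "\<exists>x. Vnb h w x"
proof -
  obtain a b where w: "w = (a, b)" by (cases w)
  have a1: "1 \<le> a" and Ma: "M * a \<le> int h" and b0: "0 \<le> b" and ba: "b < a"
    and pw: "primitive w"
    using assms(1) unfolding Piv_def rays_upto_def w by auto
  have ah: "4 * a \<le> int h" using Ma assms(2) a1
    by (meson dual_order.trans mult_right_mono zero_le_one order.trans[OF zero_le_one a1])
  obtain s t where st: "s * a + t * b = 1"
    using bezout_int[of a b] pw unfolding primitive_def w by auto
  define k where "k = (int h - t) div a"
  define u where "u = (t + k * a, k * b - s)"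
  have u1: "fst u = int h - (int h - t) mod a"
    unfolding u_def k_def by (simp add: minus_mod_eq_mult_div[symmetric] algebra_simps)
  have u1r: "fst u > int h - a" "fst u \<le> int h"
    unfolding u1 using a1 by (auto simp: pos_mod_bound pos_mod_sign)
  have du: "det2 u w = 1" unfolding u_def w det2_def using st by (simp add: algebra_simps)
  have eu: "snd u * a = fst u * b + (-1)"
    using du unfolding det2_def w by (simp add: algebra_simps)
  have u1p: "1 \<le> fst u" using u1r ah a1 by auto
  have "-1 \<le> snd u" "snd u \<le> fst u" using sec_bound[OF a1 b0 ba u1p eu] by auto
  then have "maxnorm u \<le> int h" unfolding maxnorm_def using u1r u1p ah a1 by auto
  then have "u \<in> rays_upto h" using det1_prim(1)[OF du] unfolding rays_upto_def by auto
  then have "Unb h w u" unfolding Unb_def using du u1r w by simp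
  then show "\<exists>x. Unb h w x" by blast
  define k' where "k' = (int h + t) div a"
  define v where "v = (- t + k' * a, k' * b + s)"
  have v1: "fst v = int h - (int h + t) mod a"
    unfolding v_def k'_def by (simp add: minus_mod_eq_mult_div[symmetric] algebra_simps)
  have v1r: "fst v > int h - a" "fst v \<le> int h"
    unfolding v1 using a1 by (auto simp: pos_mod_bound pos_mod_sign)
  have dv: "det2 w v = 1" unfolding v_def w det2_def using st by (simp add: algebra_simps)
  have ev: "snd v * a = fst v * b + 1"
    using dv unfolding det2_def w by (simp add: algebra_simps)
  have v1p: "1 \<le> fst v" using v1r ah a1 by auto
  have "-1 \<le> snd v" "snd v \<le> fst v" using sec_bound[OF a1 b0 ba v1p ev] by auto
  then have "maxnorm v \<le> int h" unfolding maxnorm_def using v1r v1p ah a1 by auto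
  then have "v \<in> rays_upto h" using det1_prim(2)[OF dv] unfolding rays_upto_def by auto
  then have "Vnb h w v" unfolding Vnb_def using dv v1r w by simp
  then show "\<exists>x. Vnb h w x" by blast
qed

lemma Piv_facts:
  assumes "w \<in> Piv h M" "M \<ge> 4"
  shows "1 \<le> fst w" "4 * fst w \<le> int h" "M * fst w \<le> int h" "primitive w" "w \<in> rays_upto h"
    "0 \<le> snd w" "snd w < fst w"
proof -
  have a1: "1 \<le> fst w" and Ma: "M * fst w \<le> int h"
    using assms(1) unfolding Piv_def by auto
  have "4 * fst w \<le> M * fst w" using a1 assms(2) by (intro mult_right_mono) auto
  then show "4 * fst w \<le> int h" using Ma by linarith
  show "1 \<le> fst w" "M * fst w \<le> int h" by fact+
  show "primitive w" "w \<in> rays_upto h" "0 \<le> snd w" "snd w < fst w"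
    using assms(1) unfolding Piv_def rays_upto_def by auto
qed

lemma R_abs:
  assumes "z \<in> rays_upto h" shows "\<bar>fst z\<bar> \<le> int h" "\<bar>snd z\<bar> \<le> int h"
  using assms unfolding rays_upto_def maxnorm_def by auto

lemma triple_det:
  assumes "w \<in> Piv h M" "M \<ge> 4" "Unb h w u" "Vnb h w v"
  shows "det2 u v \<ge> 2 * M - 1"
proof -
  note P = Piv_facts[OF assms(1,2)]
  have duw: "det2 u w = 1" and dwv: "det2 w v = 1" and u1: "fst u > int h - fst w" and v1: "fst v > int h - fst w"
    using assms(3,4) unfolding Unb_def Vnb_def by auto
  have "fst v = det2 v w * fst u + det2 u v * fst w"
    using cramer1[of u w v] duw by simp
  also have "det2 v w = -1" using det_swap[of v w] dwv by simp
  finally have e: "det2 u v * fst w = fst u + fst v" by simp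
  have "(2 * M - 2) * fst w \<le> 2 * (int h - fst w)" using P(3) by (simp add: algebra_simps)
  also have "\<dots> < det2 u v * fst w" unfolding e using u1 v1 by arith
  finally have "(2 * M - 2) * fst w < det2 u v * fst w" .
  then have "2 * M - 2 < det2 u v" using mult_right_less_imp_less[of "2 * M - 2" "fst w" "det2 u v"] P(1) by simp
  then show ?thesis by simp
qed

lemma triple_only:
  assumes "w \<in> Piv h M" "M \<ge> 4" "Unb h w u" "Vnb h w v"
    and z: "z \<in> rays_upto h" "det2 u z > 0" "det2 z v > 0"
  shows "z = w"
proof -
  note P = Piv_facts[OF assms(1,2)]
  have duw: "det2 u w = 1" and dwv: "det2 w v = 1" and u1: "fst u > int h - fst w" and v1: "fst v > int h - fst w"
    using assms(3,4) unfolding Unb_def Vnb_def by auto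
  have u0: "fst u \<ge> 0" "fst v \<ge> 0" using u1 v1 P(2) by auto
  define \<alpha> where "\<alpha> = det2 z w"
  have ez1: "fst z = \<alpha> * fst u + det2 u z * fst w" using cramer1[of u w z] duw unfolding \<alpha>_def by simp
  have ez2: "snd z = \<alpha> * snd u + det2 u z * snd w" using cramer2[of u w z] duw unfolding \<alpha>_def by simp
  have zh: "fst z \<le> int h" using R_abs(1)[OF z(1)] by simp
  consider "\<alpha> \<ge> 1" | "\<alpha> = 0" | "\<alpha> \<le> -1" by linarith
  then show ?thesis
  proof cases
    case 1
    have "\<alpha> * fst u \<ge> 1 * fst u" using 1 u0 by (intro mult_right_mono) auto
    moreover have "det2 u z * fst w \<ge> 1 * fst w" using z(2) P(1) by (intro mult_right_mono) auto
    ultimately have "fst z \<ge> fst u + fst w" using ez1 by simp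
    then have False using zh u1 by linarith
    then show ?thesis ..
  next
    case 2
    then have fz: "fst z = det2 u z * fst w" and sz: "snd z = det2 u z * snd w" using ez1 ez2 by auto
    then have "det2 u z dvd fst z" "det2 u z dvd snd z" by auto
    then have "det2 u z dvd 1" using prim_dvd z(1) unfolding rays_upto_def by blast
    then have "det2 u z \<le> 1" using z(2) by (simp add: zdvd_imp_le)
    then have "det2 u z = 1" using z(2) by linarith
    then show ?thesis using fz sz by (simp add: prod_eq_iff)
  next
    case 3
    have ez: "fst z = det2 z v * fst w + det2 w z * fst v" using cramer1[of w v z] dwv by simp
    have "det2 w z = - \<alpha>" unfolding \<alpha>_def using det_swap[of w z] by simp
    then have "det2 w z * fst v \<ge> 1 * fst v" using 3 u0 by (intro mult_right_mono) auto
    moreover have "det2 z v * fst w \<ge> 1 * fst w" using z(3) P(1) by (intro mult_right_mono) auto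
    ultimately have "fst z \<ge> fst v + fst w" using ez by simp
    then have False using zh v1 by linarith
    then show ?thesis ..
  qed
qed

lemma same_u:
  assumes "w \<in> Piv h M" "w' \<in> Piv h M" "M \<ge> 4" "det2 x w = 1" "det2 x w' = 1" "fst x > int h - fst w"
  shows "w' = w"
proof -
  note P = Piv_facts[OF assms(1,3)] and P' = Piv_facts[OF assms(2,3)]
  define \<alpha> where "\<alpha> = det2 w' w"
  have e1: "fst w' = \<alpha> * fst x + fst w" using cramer1[of x w w'] assms(4,5) unfolding \<alpha>_def by simp
  have e2: "snd w' = \<alpha> * snd x + snd w" using cramer2[of x w w'] assms(4,5) unfolding \<alpha>_def by simp
  have x0: "fst x \<ge> 0" using assms(6) P(2) by linarith
  consider "\<alpha> \<ge> 1" | "\<alpha> = 0" | "\<alpha> \<le> -1" by linarith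
  then show ?thesis
  proof cases
    case 1
    have "\<alpha> * fst x \<ge> 1 * fst x" using 1 x0 by (intro mult_right_mono) auto
    then have False using e1 assms(6) P'(2) P'(1) by linarith
    then show ?thesis ..
  next
    case 2 then show ?thesis using e1 e2 by (simp add: prod_eq_iff)
  next
    case 3
    have "\<alpha> * fst x \<le> (-1) * fst x" using 3 x0 by (intro mult_right_mono) auto
    then have False using e1 assms(6) P(2) P'(1) by linarith
    then show ?thesis ..
  qed
qed

lemma same_v:
  assumes "w \<in> Piv h M" "w' \<in> Piv h M" "M \<ge> 4" "det2 w x = 1" "det2 w' x = 1" "fst x > int h - fst w"
  shows "w' = w"
proof -
  note P = Piv_facts[OF assms(1,3)] and P' = Piv_facts[OF assms(2,3)]
  define \<alpha> where "\<alpha> = det2 w w'"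
  have e1: "fst w' = fst w + \<alpha> * fst x" using cramer1[of w x w'] assms(4,5) unfolding \<alpha>_def by simp
  have e2: "snd w' = snd w + \<alpha> * snd x" using cramer2[of w x w'] assms(4,5) unfolding \<alpha>_def by simp
  have x0: "fst x \<ge> 0" using assms(6) P(2) by linarith
  consider "\<alpha> \<ge> 1" | "\<alpha> = 0" | "\<alpha> \<le> -1" by linarith
  then show ?thesis
  proof cases
    case 1
    have "\<alpha> * fst x \<ge> 1 * fst x" using 1 x0 by (intro mult_right_mono) auto
    then have False using e1 assms(6) P'(2) P'(1) by linarith
    then show ?thesis ..
  next
    case 2 then show ?thesis using e1 e2 by (simp add: prod_eq_iff)
  next
    case 3
    have "\<alpha> * fst x \<le> (-1) * fst x" using 3 x0 by (intro mult_right_mono) auto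
    then have False using e1 assms(6) P(2) P'(1) by linarith
    then show ?thesis ..
  qed
qed

lemma cross_uv:
  assumes "w \<in> Piv h M" "w' \<in> Piv h M" "M \<ge> 4" "det2 x w = 1" "det2 w' x = 1" "fst x > int h - fst w"
  shows False
proof -
  note P = Piv_facts[OF assms(1,3)] and P' = Piv_facts[OF assms(2,3)]
  define \<alpha> where "\<alpha> = det2 w' w"
  have dxw': "det2 x w' = -1" using det_swap[of w' x] assms(5) by simp
  have e1: "fst w' = \<alpha> * fst x - fst w" using cramer1[of x w w'] assms(4) dxw' unfolding \<alpha>_def by simp
  have x0: "fst x \<ge> 0" using assms(6) P(2) by linarith
  consider "\<alpha> \<ge> 1" | "\<alpha> \<le> 0" by linarith
  then show ?thesis
  proof cases
    case 1
    have "\<alpha> * fst x \<ge> 1 * fst x" using 1 x0 by (intro mult_right_mono) auto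
    then show ?thesis using e1 assms(6) P'(2) P(2) by linarith
  next
    case 2
    have "\<alpha> * fst x \<le> 0" using 2 x0 by (simp add: mult_nonpos_nonneg)
    then show ?thesis using e1 P(1) P'(1) by linarith
  qed
qed

lemma piv_not_nbr:
  assumes "w \<in> Piv h M" "w' \<in> Piv h M" "M \<ge> 4" "fst x > int h - fst w"
  shows "x \<noteq> w'"
  using Piv_facts[OF assms(1,3)] Piv_facts[OF assms(2,3)] assms(4) by auto

definition uu :: "nat \<Rightarrow> int \<times> int \<Rightarrow> int \<times> int" where
  "uu h w = (SOME x. Unb h w x)"
definition vv :: "nat \<Rightarrow> int \<times> int \<Rightarrow> int \<times> int" where
  "vv h w = (SOME x. Vnb h w x)"

lemma uu_vv:
  assumes "w \<in> Piv h M" "M \<ge> 4"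
  shows "Unb h w (uu h w)" "Vnb h w (vv h w)"
  unfolding uu_def vv_def by (rule someI_ex, rule pivot_nbrs[OF assms])+

definition trip :: "nat \<Rightarrow> int \<times> int \<Rightarrow> (int \<times> int) set" where
  "trip h w = {uu h w, w, vv h w}"

lemma trip_disj:
  assumes "w \<in> Piv h M" "w' \<in> Piv h M" "M \<ge> 4" "w \<noteq> w'"
  shows "trip h w \<inter> trip h w' = {}"
proof -
  have U: "Unb h w (uu h w)" "Vnb h w (vv h w)" using uu_vv[OF assms(1,3)] by auto
  have U': "Unb h w' (uu h w')" "Vnb h w' (vv h w')" using uu_vv[OF assms(2,3)] by auto
  have a1: "det2 (uu h w) w = 1" "fst (uu h w) > int h - fst w" using U(1) unfolding Unb_def by auto
  have a2: "det2 w (vv h w) = 1" "fst (vv h w) > int h - fst w" using U(2) unfolding Vnb_def by auto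
  have b1: "det2 (uu h w') w' = 1" "fst (uu h w') > int h - fst w'" using U'(1) unfolding Unb_def by auto
  have b2: "det2 w' (vv h w') = 1" "fst (vv h w') > int h - fst w'" using U'(2) unfolding Vnb_def by auto
  have n1: "uu h w \<noteq> uu h w'"
  proof
    assume e: "uu h w = uu h w'"
    have "det2 (uu h w) w' = 1" using b1(1) e by simp
    then have "w' = w" by (rule same_u[OF assms(1,2,3) a1(1) _ a1(2)])
    then show False using assms(4) by simp
  qed
  have n2: "vv h w \<noteq> vv h w'"
  proof
    assume e: "vv h w = vv h w'"
    have "det2 w' (vv h w) = 1" using b2(1) e by simp
    then have "w' = w" by (rule same_v[OF assms(1,2,3) a2(1) _ a2(2)])
    then show False using assms(4) by simp
  qed
  have n3: "uu h w \<noteq> vv h w'"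
  proof
    assume e: "uu h w = vv h w'"
    have "det2 w' (uu h w) = 1" using b2(1) e by simp
    then show False by (rule cross_uv[OF assms(1,2,3) a1(1) _ a1(2)])
  qed
  have n4: "vv h w \<noteq> uu h w'"
  proof
    assume e: "vv h w = uu h w'"
    have "det2 w (uu h w') = 1" using a2(1) e by simp
    then show False by (rule cross_uv[OF assms(2,1,3) b1(1) _ b1(2)])
  qed
  have n5: "uu h w \<noteq> w'" "vv h w \<noteq> w'"
    by (rule piv_not_nbr[OF assms(1,2,3) a1(2)], rule piv_not_nbr[OF assms(1,2,3) a2(2)])
  have n6: "uu h w' \<noteq> w" "vv h w' \<noteq> w"
    by (rule piv_not_nbr[OF assms(2,1,3) b1(2)], rule piv_not_nbr[OF assms(2,1,3) b2(2)])
  show ?thesis unfolding trip_def using n1 n2 n3 n4 n5 n6 assms(4) by blast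
qed

lemma trip_card:
  assumes "w \<in> Piv h M" "M \<ge> 4"
  shows "uu h w \<noteq> w" "vv h w \<noteq> w" "uu h w \<noteq> vv h w" "trip h w \<subseteq> rays_upto h"
proof -
  have U: "Unb h w (uu h w)" "Vnb h w (vv h w)" using uu_vv[OF assms] by auto
  have "fst (uu h w) > int h - fst w" "fst (vv h w) > int h - fst w" using U unfolding Unb_def Vnb_def by auto
  then show "uu h w \<noteq> w" "vv h w \<noteq> w"
    using piv_not_nbr[OF assms(1,1,2)] by auto
  have "det2 (uu h w) (vv h w) \<ge> 2 * M - 1" using triple_det[OF assms U] .
  then show "uu h w \<noteq> vv h w" using assms(2) by (auto simp: det2_def)
  have "uu h w \<in> rays_upto h" "vv h w \<in> rays_upto h" using U unfolding Unb_def Vnb_def by auto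
  then show "trip h w \<subseteq> rays_upto h" using Piv_facts(5)[OF assms] unfolding trip_def by auto
qed

lemma witness:
  assumes "w \<in> Piv h M" "M \<ge> 4" "S \<subseteq> rays_upto h" "uu h w \<in> S" "vv h w \<in> S" "w \<notin> S"
  shows "cone2 S (uu h w) (vv h w)" "sing_index (uu h w) (vv h w) \<ge> 2 * M - 1"
proof -
  have U: "Unb h w (uu h w)" "Vnb h w (vv h w)" using uu_vv[OF assms(1,2)] by auto
  have d: "det2 (uu h w) (vv h w) \<ge> 2 * M - 1" using triple_det[OF assms(1,2) U] .
  then show "sing_index (uu h w) (vv h w) \<ge> 2 * M - 1" unfolding sing_index_def by auto
  have "\<not> (\<exists>z\<in>S. det2 (uu h w) z > 0 \<and> det2 z (vv h w) > 0)"
  proof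
    assume "\<exists>z\<in>S. det2 (uu h w) z > 0 \<and> det2 z (vv h w) > 0"
    then obtain z where z: "z \<in> S" "det2 (uu h w) z > 0" "det2 z (vv h w) > 0" by blast
    have "z = w" using triple_only[OF assms(1,2) U _ z(2,3)] z(1) assms(3) by blast
    then show False using z(1) assms(6) by simp
  qed
  moreover have "det2 (uu h w) (vv h w) > 0" using d assms(2) by linarith
  ultimately show "cone2 S (uu h w) (vv h w)" unfolding cone2_def using assms(4,5) by blast
qed

lemma slope_le:
  fixes a b c d :: int
  assumes "b > 0" "d > 0" "real_of_int a / real_of_int b \<le> real_of_int c / real_of_int d"
  shows "a * d \<le> c * b"
proof -
  have "real_of_int a * real_of_int d \<le> real_of_int c * real_of_int b"
    using assms by (simp add: field_simps)
  then show ?thesis by (simp flip: of_int_mult)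
qed

lemma sparse_nonsmooth:
  assumes "finite S" "S \<subseteq> rays_upto h" "(1,0) \<notin> S"
    "v0 \<in> S" "fst v0 > 0" "snd v0 > 0" "u0 \<in> S" "fst u0 > 0" "snd u0 < 0"
  shows "\<not> smooth_fan S"
proof -
  define A where "A = {z\<in>S. fst z > 0 \<and> snd z > 0}"
  define B where "B = {z\<in>S. fst z > 0 \<and> snd z < 0}"
  define f where "f = (\<lambda>z::int\<times>int. real_of_int (snd z) / real_of_int (fst z))"
  define g where "g = (\<lambda>z::int\<times>int. - (real_of_int (snd z) / real_of_int (fst z)))"
  have "v0 \<in> A" unfolding A_def using assms(4-6) by simp
  then have fA2: "A \<noteq> {}" by blast
  have fA1: "finite A" using assms(1) unfolding A_def by simp
  note fA = fA1 fA2
  have "u0 \<in> B" unfolding B_def using assms(7-9) by simp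
  then have fB2: "B \<noteq> {}" by blast
  have fB1: "finite B" using assms(1) unfolding B_def by simp
  note fB = fB1 fB2
  define v where "v = arg_min_on f A"
  define u where "u = arg_min_on g B"
  have vA: "v \<in> A" unfolding v_def by (rule arg_min_if_finite(1)[OF fA])
  have uB: "u \<in> B" unfolding u_def by (rule arg_min_if_finite(1)[OF fB])
  have vmin: "det2 z v \<le> 0" if "z \<in> A" for z
  proof -
    have "f v \<le> f z" unfolding v_def using arg_min_least[OF fA that] .
    then have "snd v * fst z \<le> snd z * fst v"
      using vA that unfolding f_def A_def by (intro slope_le) auto
    then show ?thesis unfolding det2_def by (simp add: algebra_simps)
  qed
  have umax: "det2 u z \<le> 0" if "z \<in> B" for z
  proof -
    have "g u \<le> g z" unfolding u_def using arg_min_least[OF fB that] .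
    then have "f z \<le> f u" unfolding f_def g_def by simp
    then have "snd z * fst u \<le> snd u * fst z"
      using uB that unfolding f_def B_def by (intro slope_le) auto
    then show ?thesis unfolding det2_def by (simp add: algebra_simps)
  qed
  have v1: "fst v > 0" "snd v > 0" "v \<in> S" using vA unfolding A_def by auto
  have u1: "fst u > 0" "snd u < 0" "u \<in> S" using uB unfolding B_def by auto
  have "0 < fst u * snd v" using v1 u1 by (intro mult_pos_pos) auto
  then have p1: "fst u * snd v \<ge> 1" by linarith
  have "0 < (- snd u) * fst v" using v1 u1 by (intro mult_pos_pos) auto
  then have p2: "- snd u * fst v \<ge> 1" by linarith
  have duv: "det2 u v \<ge> 2" unfolding det2_def using p1 p2 by (simp add: algebra_simps)
  have nb: "\<not> (\<exists>z\<in>S. det2 u z > 0 \<and> det2 z v > 0)"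
  proof
    assume "\<exists>z\<in>S. det2 u z > 0 \<and> det2 z v > 0"
    then obtain z where z: "z \<in> S" "det2 u z > 0" "det2 z v > 0" by blast
    have e: "det2 u v * fst z = det2 z v * fst u + det2 u z * fst v"
      by (rule cramer1)
    have "det2 z v * fst u > 0" "det2 u z * fst v > 0" using z u1 v1 by (simp_all add: mult_pos_pos)
    then have "det2 u v * fst z > 0" using e by simp
    then have z1: "fst z > 0" using duv by (simp add: zero_less_mult_iff)
    consider "snd z > 0" | "snd z < 0" | "snd z = 0" by linarith
    then show False
    proof cases
      case 1 then have "z \<in> A" using z(1) z1 unfolding A_def by auto
      then show False using vmin[of z] z(3) by linarith
    next
      case 2 then have "z \<in> B" using z(1) z1 unfolding B_def by auto
      then show False using umax[of z] z(2) by linarith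
    next
      case 3
      have "primitive z" using z(1) assms(2) unfolding rays_upto_def by auto
      then have "gcd (fst z) 0 = 1" using 3 unfolding primitive_def by simp
      then have "fst z = 1" using z1 by simp
      then have "z = (1,0)" using 3 by (simp add: prod_eq_iff)
      then show False using z(1) assms(3) by simp
    qed
  qed
  have "cone2 S u v" unfolding cone2_def using nb duv u1(3) v1(3) by auto
  moreover have "sing_index u v \<noteq> 1" unfolding sing_index_def using duv by auto
  ultimately show ?thesis unfolding smooth_fan_def by blast
qed

lemma prob_pair_prod:
  "measure_pmf.prob (pair_pmf M N) (A \<times> B) = measure_pmf.prob M A * measure_pmf.prob N B"
proof -
  have "measure_pmf.prob (pair_pmf M N) (A \<times> B) =
        measure_pmf.prob (pair_pmf M N) ((A \<times> B) \<inter> set_pmf (pair_pmf M N))"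
    by (rule measure_Int_set_pmf[symmetric])
  also have "(A \<times> B) \<inter> set_pmf (pair_pmf M N) = (A \<inter> set_pmf M) \<times> (B \<inter> set_pmf N)" by auto
  also have "measure_pmf.prob (pair_pmf M N) \<dots> =
      measure_pmf.prob M (A \<inter> set_pmf M) * measure_pmf.prob N (B \<inter> set_pmf N)"
    by (rule measure_pmf_prob_product) auto
  also have "\<dots> = measure_pmf.prob M A * measure_pmf.prob N B"
    by (simp add: measure_Int_set_pmf)
  finally show ?thesis .
qed

lemma prob_local:
  assumes "finite A" "Tb \<subseteq> B" "B \<subseteq> A"
    and loc: "\<And>f g. (\<forall>x\<in>Tb. f x = g x) \<Longrightarrow> Q f = Q g"
  shows "measure_pmf.prob (Pi_pmf B dflt p) {f. Q f} = measure_pmf.prob (Pi_pmf A dflt p) {f. Q f}"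
proof -
  have "Pi_pmf B dflt p = map_pmf (\<lambda>f x. if x \<in> B then f x else dflt) (Pi_pmf A dflt p)"
    by (rule Pi_pmf_subset[OF assms(1,3)])
  then have "measure_pmf.prob (Pi_pmf B dflt p) {f. Q f} =
      measure_pmf.prob (Pi_pmf A dflt p) ((\<lambda>f x. if x \<in> B then f x else dflt) -` {f. Q f})" by simp
  also have "(\<lambda>f x. if x \<in> B then f x else dflt) -` {f. Q f} = {f. Q f}"
  proof -
    have "Q (\<lambda>x. if x \<in> B then f x else dflt) = Q f" for f
      by (rule loc) (use assms(2) in auto)
    then show ?thesis by auto
  qed
  finally show ?thesis .
qed

lemma prob_blocks:
  fixes Tb :: "'i \<Rightarrow> 'a set" and Q :: "'i \<Rightarrow> ('a \<Rightarrow> 'b) \<Rightarrow> bool"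
  assumes "finite I"
  shows "finite A \<Longrightarrow> (\<forall>i\<in>I. Tb i \<subseteq> A) \<Longrightarrow> (\<forall>i\<in>I. \<forall>j\<in>I. i \<noteq> j \<longrightarrow> Tb i \<inter> Tb j = {}) \<Longrightarrow>
    (\<forall>i\<in>I. \<forall>f g. (\<forall>x\<in>Tb i. f x = g x) \<longrightarrow> Q i f = Q i g) \<Longrightarrow>
    measure_pmf.prob (Pi_pmf A dflt p) {f. \<forall>i\<in>I. Q i f} =
    (\<Prod>i\<in>I. measure_pmf.prob (Pi_pmf A dflt p) {f. Q i f})"
  using assms
proof (induction I arbitrary: A rule: finite_induct)
  case empty
  then show ?case by simp
next
  case (insert j I A)
  define m where "m = (\<lambda>(f::'a\<Rightarrow>'b, g::'a\<Rightarrow>'b) x. if x \<in> Tb j then f x else g x)"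
  have TjA: "Tb j \<subseteq> A" using insert.prems by auto
  have fTj: "finite (Tb j)" using TjA insert.prems(1) by (rule finite_subset)
  have disj: "Tb j \<inter> (A - Tb j) = {}" by auto
  have AU: "A = Tb j \<union> (A - Tb j)" using TjA by auto
  have PA: "Pi_pmf A dflt p = map_pmf m (pair_pmf (Pi_pmf (Tb j) dflt p) (Pi_pmf (A - Tb j) dflt p))"
    unfolding m_def by (subst AU, rule Pi_pmf_union) (use fTj insert.prems(1) in auto)
  have TI: "\<forall>i\<in>I. Tb i \<subseteq> A - Tb j" using insert.prems(2,3) insert.hyps(2) by fastforce
  have locj: "\<And>f g. (\<forall>x\<in>Tb j. f x = g x) \<Longrightarrow> Q j f = Q j g" using insert.prems(4) by blast
  have loci: "\<And>f g. i \<in> I \<Longrightarrow> (\<forall>x\<in>Tb i. f x = g x) \<Longrightarrow> Q i f = Q i g" for i using insert.prems(4) by blast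
  have pre: "m -` {f. \<forall>i\<in>insert j I. Q i f} = {f. Q j f} \<times> {g. \<forall>i\<in>I. Q i g}"
  proof -
    have "Q j (m (f, g)) = Q j f" for f g by (rule locj) (auto simp: m_def)
    moreover have "Q i (m (f, g)) = Q i g" if "i \<in> I" for i f g
      by (rule loci[OF that]) (use TI that in \<open>auto simp: m_def\<close>)
    ultimately show ?thesis by auto
  qed
  have "measure_pmf.prob (Pi_pmf A dflt p) {f. \<forall>i\<in>insert j I. Q i f} =
      measure_pmf.prob (Pi_pmf (Tb j) dflt p) {f. Q j f} * measure_pmf.prob (Pi_pmf (A - Tb j) dflt p) {g. \<forall>i\<in>I. Q i g}"
    unfolding PA measure_map_pmf pre by (rule prob_pair_prod)
  also have "measure_pmf.prob (Pi_pmf (Tb j) dflt p) {f. Q j f} = measure_pmf.prob (Pi_pmf A dflt p) {f. Q j f}"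
    by (rule prob_local[OF insert.prems(1) order.refl TjA locj])
  also have "measure_pmf.prob (Pi_pmf (A - Tb j) dflt p) {g. \<forall>i\<in>I. Q i g} =
      (\<Prod>i\<in>I. measure_pmf.prob (Pi_pmf (A - Tb j) dflt p) {f. Q i f})"
    by (rule insert.IH) (use insert.prems TI in auto)
  also have "\<dots> = (\<Prod>i\<in>I. measure_pmf.prob (Pi_pmf A dflt p) {f. Q i f})"
  proof (rule prod.cong[OF refl])
    fix i assume i: "i \<in> I"
    show "measure_pmf.prob (Pi_pmf (A - Tb j) dflt p) {f. Q i f} = measure_pmf.prob (Pi_pmf A dflt p) {f. Q i f}"
      by (rule prob_local[OF insert.prems(1) _ _ loci[OF i]]) (use TI i in auto)
  qed
  finally show ?case using insert.hyps by simp
qed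

lemma prob_coords:
  assumes "finite R" "X \<subseteq> R" "0 \<le> p" "p \<le> 1"
  shows "measure_pmf.prob (Pi_pmf R False (\<lambda>_. bernoulli_pmf p)) {f. \<forall>x\<in>X. f x = c x} =
         (\<Prod>x\<in>X. if c x then p else 1 - p)"
proof -
  define B where "B = (\<lambda>x. if x \<in> X then {c x} else (UNIV :: bool set))"
  have "{f. \<forall>x\<in>X. f x = c x} = Pi R B" unfolding B_def Pi_def using assms(2) by auto
  then have "measure_pmf.prob (Pi_pmf R False (\<lambda>_. bernoulli_pmf p)) {f. \<forall>x\<in>X. f x = c x} =
      (\<Prod>x\<in>R. measure_pmf.prob (bernoulli_pmf p) (B x))"
    using measure_Pi_pmf_Pi[OF assms(1)] by simp
  also have "\<dots> = (\<Prod>x\<in>X. measure_pmf.prob (bernoulli_pmf p) (B x))"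
    by (rule prod.mono_neutral_right[OF assms(1,2)]) (auto simp: B_def)
  also have "\<dots> = (\<Prod>x\<in>X. if c x then p else 1 - p)"
    by (rule prod.cong[OF refl]) (use assms(3,4) in \<open>auto simp: B_def measure_pmf_single\<close>)
  finally show ?thesis .
qed

lemma inv_sq_sum: "n \<ge> 2 \<Longrightarrow> (\<Sum>d=2..n. 1 / (real d)^2) \<le> 3/4 - 1 / real n"
proof (induction n rule: nat_induct_at_least)
  case base
  then show ?case by simp
next
  case (Suc n)
  have "(\<Sum>d=2..Suc n. 1 / (real d)^2) = (\<Sum>d=2..n. 1 / (real d)^2) + 1 / (real (Suc n))^2"
    using Suc.hyps by simp
  also have "\<dots> \<le> 3/4 - 1 / real n + 1 / (real (Suc n))^2" using Suc.IH by simp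
  also have "\<dots> \<le> 3/4 - 1 / real (Suc n)"
  proof -
    have n: "real n \<ge> 2" using Suc.hyps by simp
    have "1 / (real (Suc n))^2 \<le> 1 / (real n * real (Suc n))"
      using n by (intro divide_left_mono) (auto simp: power2_eq_square intro!: mult_right_mono)
    also have "\<dots> = 1 / real n - 1 / real (Suc n)" using n by (simp add: field_simps)
    finally show ?thesis by simp
  qed
  finally show ?case .
qed

lemma inv_sq_sum': "(\<Sum>d=2..n. 1 / (real d)^2) \<le> 3/4"
proof (cases "n \<ge> 2")
  case True
  have "1 / real n \<ge> 0" by simp
  then show ?thesis using inv_sq_sum[OF True] by linarith
next
  case False
  then have "{2..n} = {}" by auto
  then show ?thesis by simp
qed

definition cop :: "nat \<Rightarrow> (nat \<times> nat) set" where
  "cop H = {p \<in> {1..H} \<times> {1..H}. coprime (fst p) (snd p)}"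

lemma card_cop: "real (card (cop H)) \<ge> (real H)^2 / 4"
proof -
  define Sq where "Sq = {1..H} \<times> {1..H}"
  define D where "D = (\<lambda>d. (\<lambda>(x,y). (d*x, d*y)) ` ({1..H div d} \<times> {1..H div d}))"
  have fSq: "finite Sq" unfolding Sq_def by simp
  have cS: "card Sq = H^2" unfolding Sq_def by (simp add: power2_eq_square)
  have copS: "cop H \<subseteq> Sq" unfolding cop_def Sq_def by auto
  have sub: "Sq - cop H \<subseteq> (\<Union>d\<in>{2..H}. D d)"
  proof
    fix z assume z: "z \<in> Sq - cop H"
    obtain a b where ab: "z = (a,b)" by (cases z)
    have a: "1 \<le> a" "a \<le> H" and b: "1 \<le> b" "b \<le> H" and nc: "\<not> coprime a b"
      using z unfolding ab Sq_def cop_def by auto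
    define g where "g = gcd a b"
    have g0: "g > 0" using a unfolding g_def by simp
    have g1: "g \<noteq> 1" using nc unfolding g_def by (simp add: coprime_iff_gcd_eq_1)
    have gle: "g \<le> a" unfolding g_def using a by (simp add: gcd_le1_nat)
    obtain x where x: "a = g * x" unfolding g_def by (meson gcd_dvd1 dvdE)
    obtain y where y: "b = g * y" unfolding g_def by (meson gcd_dvd2 dvdE)
    have x1: "1 \<le> x" using x a by (cases x) auto
    have y1: "1 \<le> y" using y b by (cases y) auto
    have "x \<le> H div g" using x a g0 by (metis div_le_mono nonzero_mult_div_cancel_left not_gr0)
    moreover have "y \<le> H div g" using y b g0 by (metis div_le_mono nonzero_mult_div_cancel_left not_gr0)
    ultimately have "(x,y) \<in> {1..H div g} \<times> {1..H div g}" using x1 y1 by auto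
    moreover have "z = (\<lambda>(x,y). (g*x, g*y)) (x,y)" using x y ab by simp
    ultimately have "z \<in> D g" unfolding D_def by (rule rev_image_eqI)
    moreover have "g \<in> {2..H}" using g0 g1 gle a by auto
    ultimately show "z \<in> (\<Union>d\<in>{2..H}. D d)" by blast
  qed
  have "card (Sq - cop H) \<le> card (\<Union>d\<in>{2..H}. D d)"
    by (rule card_mono[OF _ sub]) (simp add: D_def)
  also have "\<dots> \<le> (\<Sum>d\<in>{2..H}. card (D d))" by (rule card_UN_le) simp
  also have "\<dots> \<le> (\<Sum>d\<in>{2..H}. (H div d)^2)"
  proof (rule sum_mono)
    fix d show "card (D d) \<le> (H div d)^2"
      unfolding D_def using card_image_le[of "{1..H div d} \<times> {1..H div d}" "\<lambda>(x,y). (d*x, d*y)"]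
      by (simp add: power2_eq_square)
  qed
  finally have c1: "card (Sq - cop H) \<le> (\<Sum>d\<in>{2..H}. (H div d)^2)" .
  have "real (\<Sum>d\<in>{2..H}. (H div d)^2) = (\<Sum>d\<in>{2..H}. (real (H div d))^2)" by simp
  also have "\<dots> \<le> (\<Sum>d\<in>{2..H}. (real H)^2 * (1 / (real d)^2))"
  proof (rule sum_mono)
    fix d assume d: "d \<in> {2..H}"
    have "real (H div d) \<le> real H / real d" by (rule of_nat_div_le_of_nat)
    then have "(real (H div d))^2 \<le> (real H / real d)^2" by (intro power_mono) auto
    then show "(real (H div d))^2 \<le> (real H)^2 * (1 / (real d)^2)" by (simp add: power_divide)
  qed
  also have "\<dots> = (real H)^2 * (\<Sum>d\<in>{2..H}. 1 / (real d)^2)" by (simp add: sum_distrib_left)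
  also have "\<dots> \<le> (real H)^2 * (3/4)" by (intro mult_left_mono inv_sq_sum') auto
  finally have c2': "real (\<Sum>d\<in>{2..H}. (H div d)^2) \<le> (real H)^2 * (3/4)" .
  have "real (card (Sq - cop H)) \<le> real (\<Sum>d\<in>{2..H}. (H div d)^2)" using c1 by (simp only: of_nat_le_iff)
  then have c2: "real (card (Sq - cop H)) \<le> 3/4 * (real H)^2" using c2' by linarith
  have "card Sq = card (cop H) + card (Sq - cop H)"
    using card_Diff_subset[OF finite_subset[OF copS fSq] copS] card_mono[OF fSq copS] by simp
  then have "real (card Sq) = real (card (cop H)) + real (card (Sq - cop H))" by simp
  then show ?thesis using c2 cS by simp
qed

definition lt :: "nat \<Rightarrow> (nat \<times> nat) set" where
  "lt H = {p \<in> cop H. snd p < fst p}"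

lemma card_lt: "real (card (lt H)) \<ge> (real H)^2 / 8 - 1/2"
proof -
  define gt where "gt = {p \<in> cop H. fst p < snd p}"
  define eq where "eq = {p \<in> cop H. fst p = snd p}"
  have fin: "finite (cop H)" unfolding cop_def by simp
  have "cop H = lt H \<union> gt \<union> eq" unfolding lt_def gt_def eq_def by auto
  then have "card (cop H) \<le> card (lt H \<union> gt) + card eq" by (simp add: card_Un_le)
  also have "card (lt H \<union> gt) \<le> card (lt H) + card gt" by (rule card_Un_le)
  finally have "card (cop H) \<le> card (lt H) + card gt + card eq" by simp
  moreover have "gt \<subseteq> (\<lambda>(a,b). (b,a)) ` lt H"
  proof
    fix z assume "z \<in> gt"
    then obtain a b where z: "z = (a,b)" "(a,b) \<in> gt" by (cases z) auto
    then have "(b,a) \<in> lt H" unfolding gt_def lt_def cop_def by (auto simp: ac_simps)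
    then show "z \<in> (\<lambda>(a,b). (b,a)) ` lt H" unfolding z by (rule rev_image_eqI) simp
  qed
  then have "card gt \<le> card ((\<lambda>(a,b). (b,a)) ` lt H)"
    by (rule card_mono[rotated]) (simp add: finite_subset[OF _ fin] lt_def)
  then have "card gt \<le> card (lt H)" using card_image_le[of "lt H" "\<lambda>(a,b). (b,a)"]
    by (simp add: finite_subset[OF _ fin] lt_def)
  moreover have "eq \<subseteq> {(1,1)}" unfolding eq_def cop_def by auto
  then have "card eq \<le> card {(1::nat,1::nat)}" by (intro card_mono) simp_all
  then have "card eq \<le> 1" by simp
  ultimately have "card (cop H) \<le> 2 * card (lt H) + 1" by linarith
  then have "real (card (cop H)) \<le> 2 * real (card (lt H)) + 1" by linarith
  then show ?thesis using card_cop[of H] by linarith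
qed

lemma finite_R: "finite (rays_upto h)"
proof -
  have "rays_upto h \<subseteq> {-int h..int h} \<times> {-int h..int h}"
    unfolding rays_upto_def maxnorm_def by auto
  then show ?thesis by (rule finite_subset) simp
qed

lemma card_R: "card (rays_upto h) \<le> (2 * h + 1)^2"
proof -
  have "rays_upto h \<subseteq> {-int h..int h} \<times> {-int h..int h}"
    unfolding rays_upto_def maxnorm_def by auto
  then have "card (rays_upto h) \<le> card ({-int h..int h} \<times> {-int h..int h})" by (rule card_mono[rotated]) simp
  also have "\<dots> = (nat (2 * int h + 1))^2" by (simp add: card_cartesian_product power2_eq_square)
  also have "nat (2 * int h + 1) = 2 * h + 1" by arith
  finally show ?thesis .
qed

lemma card_Piv:
  assumes "M > 0"
  shows "real (card (Piv h M)) \<ge> (real (nat (int h div M)))^2 / 8 - 1/2"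
proof -
  define H where "H = nat (int h div M)"
  define emb where "emb = (\<lambda>(a::nat,b::nat). (int a, int b))"
  have "emb ` lt H \<subseteq> Piv h M"
  proof
    fix z assume "z \<in> emb ` lt H"
    then obtain a b where z: "z = (int a, int b)" and ab: "(a,b) \<in> lt H" unfolding emb_def by auto
    have a: "1 \<le> a" "a \<le> H" "b < a" "1 \<le> b" "coprime a b" using ab unfolding lt_def cop_def by auto
    have x0: "int h div M \<ge> 0" using assms by (simp add: pos_imp_zdiv_nonneg_iff)
    have "int a \<le> int h div M" using a(2) le_nat_iff[OF x0] unfolding H_def by simp
    then have "M * int a \<le> M * (int h div M)" using assms by (intro mult_left_mono) auto
    also have "\<dots> = int h - int h mod M" by (simp add: minus_mod_eq_mult_div)
    also have "\<dots> \<le> int h" using assms by (simp add: pos_mod_sign)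
    finally have Ma: "M * int a \<le> int h" .
    have aH: "int a \<le> int h"
    proof -
      have "1 * int a \<le> M * int a" using assms a by (intro mult_right_mono) auto
      then show ?thesis using Ma by simp
    qed
    have "primitive (int a, int b)" unfolding primitive_def using a(5) by (simp add: coprime_iff_gcd_eq_1)
    moreover have "maxnorm (int a, int b) \<le> int h" unfolding maxnorm_def using a aH by auto
    ultimately show "z \<in> Piv h M" unfolding Piv_def rays_upto_def z using a Ma by auto
  qed
  moreover have "finite (Piv h M)" using finite_R[of h] unfolding Piv_def by simp
  ultimately have "card (emb ` lt H) \<le> card (Piv h M)" by (rule card_mono[rotated])
  moreover have "inj_on emb (lt H)" unfolding emb_def inj_on_def by auto
  ultimately have "card (lt H) \<le> card (Piv h M)" by (simp add: card_image)
  then show ?thesis using card_lt[of H] unfolding H_def by linarith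
qed

definition PP :: "nat \<Rightarrow> real \<Rightarrow> ((int \<times> int) \<Rightarrow> bool) pmf" where
  "PP h p = Pi_pmf (rays_upto h) False (\<lambda>_. bernoulli_pmf p)"

lemma probT: "measure_pmf.prob (T h p) X = measure_pmf.prob (PP h p) {f. {u \<in> rays_upto h. f u} \<in> X}"
  unfolding T_def PP_def by (simp add: vimage_def)

lemma prob_mono_PP: "A \<subseteq> B \<Longrightarrow> measure_pmf.prob M A \<le> measure_pmf.prob M B"
  by (rule measure_pmf.finite_measure_mono) simp_all

lemma smooth_empty: "smooth_fan {}"
  unfolding smooth_fan_def cone2_def by simp

lemma bern_pow:
  assumes "0 \<le> x" "x \<le> 1"
  shows "(1 - x) ^ n \<ge> 1 - real n * x"
  using Bernoulli_inequality[of "- x" n] assms by simp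

lemma part1_empty:
  assumes "0 \<le> p" "p \<le> 1"
  shows "measure_pmf.prob (T h p) {S. smooth_fan S} \<ge> 1 - real (card (rays_upto h)) * p"
proof -
  have "{f. \<forall>x\<in>rays_upto h. f x = False} \<subseteq> {f. {u \<in> rays_upto h. f u} \<in> {S. smooth_fan S}}"
  proof
    fix f assume "f \<in> {f. \<forall>x\<in>rays_upto h. f x = False}"
    then have e: "{u \<in> rays_upto h. f u} = {}" by auto
    show "f \<in> {f. {u \<in> rays_upto h. f u} \<in> {S. smooth_fan S}}" unfolding mem_Collect_eq e by (rule smooth_empty)
  qed
  then have "measure_pmf.prob (PP h p) {f. \<forall>x\<in>rays_upto h. f x = False} \<le> measure_pmf.prob (T h p) {S. smooth_fan S}"
    unfolding probT by (rule prob_mono_PP)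
  moreover have "measure_pmf.prob (PP h p) {f. \<forall>x\<in>rays_upto h. f x = False} = (1 - p) ^ card (rays_upto h)"
    unfolding PP_def using prob_coords[OF finite_R order.refl assms, where c="\<lambda>_. False"] by simp
  ultimately show ?thesis using bern_pow[OF assms, of "card (rays_upto h)"] by linarith
qed

lemma part1_full:
  assumes "0 \<le> p" "p \<le> 1"
  shows "measure_pmf.prob (T h p) {S. smooth_fan S} \<ge> 1 - real (card (rays_upto h)) * (1 - p)"
proof -
  have "{f. \<forall>x\<in>rays_upto h. f x = True} \<subseteq> {f. {u \<in> rays_upto h. f u} \<in> {S. smooth_fan S}}"
  proof
    fix f assume "f \<in> {f. \<forall>x\<in>rays_upto h. f x = True}"
    then have e: "{u \<in> rays_upto h. f u} = rays_upto h" by auto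
    show "f \<in> {f. {u \<in> rays_upto h. f u} \<in> {S. smooth_fan S}}" unfolding mem_Collect_eq e by (rule R_smooth)
  qed
  then have "measure_pmf.prob (PP h p) {f. \<forall>x\<in>rays_upto h. f x = True} \<le> measure_pmf.prob (T h p) {S. smooth_fan S}"
    unfolding probT by (rule prob_mono_PP)
  moreover have "measure_pmf.prob (PP h p) {f. \<forall>x\<in>rays_upto h. f x = True} = p ^ card (rays_upto h)"
    unfolding PP_def using prob_coords[OF finite_R order.refl assms, where c="\<lambda>_. True"] by simp
  moreover have "p ^ card (rays_upto h) \<ge> 1 - real (card (rays_upto h)) * (1 - p)"
    using bern_pow[of "1 - p" "card (rays_upto h)"] assms by simp
  ultimately show ?thesis by linarith
qed

definition Ev :: "nat \<Rightarrow> int \<Rightarrow> ((int \<times> int) \<Rightarrow> bool) set" where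
  "Ev h M = {f. \<exists>w\<in>Piv h M. f (uu h w) \<and> f (vv h w) \<and> \<not> f w}"

lemma Ev_witness:
  assumes "M \<ge> 4" "f \<in> Ev h M"
  shows "\<exists>u v. cone2 {u \<in> rays_upto h. f u} u v \<and> sing_index u v \<ge> 2 * M - 1"
proof -
  obtain w where w: "w \<in> Piv h M" "f (uu h w)" "f (vv h w)" "\<not> f w" using assms(2) unfolding Ev_def by auto
  have t: "trip h w \<subseteq> rays_upto h" using trip_card(4)[OF w(1) assms(1)] .
  then have "uu h w \<in> {u \<in> rays_upto h. f u}" "vv h w \<in> {u \<in> rays_upto h. f u}"
    using w unfolding trip_def by auto
  moreover have "w \<notin> {u \<in> rays_upto h. f u}" using w by auto
  ultimately show ?thesis using witness[OF w(1) assms(1), of "{u \<in> rays_upto h. f u}"] by blast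
qed

lemma dense_bound:
  assumes "M \<ge> 4" "0 \<le> p" "p \<le> 1"
  shows "measure_pmf.prob (PP h p) (Ev h M) \<ge> 1 - exp (- (p^2 * (1 - p) * real (card (Piv h M))))"
proof -
  let ?I = "Piv h M"
  let ?Q = "\<lambda>w f. \<not> (f (uu h w) \<and> f (vv h w) \<and> \<not> f w)"
  have fI: "finite ?I" using finite_R[of h] unfolding Piv_def by simp
  have compl: "UNIV - Ev h M = {f. \<forall>w\<in>?I. ?Q w f}" unfolding Ev_def by auto
  have "measure_pmf.prob (PP h p) {f. \<forall>w\<in>?I. ?Q w f} = (\<Prod>w\<in>?I. measure_pmf.prob (PP h p) {f. ?Q w f})"
    unfolding PP_def
  proof (rule prob_blocks[OF fI finite_R])
    show "\<forall>i\<in>?I. trip h i \<subseteq> rays_upto h" using trip_card(4) assms(1) by blast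
    show "\<forall>i\<in>?I. \<forall>j\<in>?I. i \<noteq> j \<longrightarrow> trip h i \<inter> trip h j = {}" using trip_disj assms(1) by blast
    show "\<forall>i\<in>?I. \<forall>f g. (\<forall>x\<in>trip h i. f x = g x) \<longrightarrow> ?Q i f = ?Q i g" unfolding trip_def by simp
  qed
  also have "\<dots> = (\<Prod>w\<in>?I. 1 - p^2 * (1 - p))"
  proof (rule prod.cong[OF refl])
    fix w assume w: "w \<in> ?I"
    note tc = trip_card[OF w assms(1)]
    have "{f. \<not> ?Q w f} = {f. \<forall>x\<in>trip h w. f x = (x \<noteq> w)}" unfolding trip_def using tc by auto
    then have "measure_pmf.prob (PP h p) {f. \<not> ?Q w f} = (\<Prod>x\<in>trip h w. if x \<noteq> w then p else 1 - p)"
      unfolding PP_def using prob_coords[OF finite_R tc(4) assms(2,3), where c="\<lambda>x. x \<noteq> w"] by simp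
    also have "\<dots> = p^2 * (1 - p)" unfolding trip_def using tc(1-3) by (simp add: power2_eq_square)
    finally have e: "measure_pmf.prob (PP h p) {f. \<not> ?Q w f} = p^2 * (1 - p)" .
    have "{f. ?Q w f} = UNIV - {f. \<not> ?Q w f}" by auto
    then have "measure_pmf.prob (PP h p) {f. ?Q w f} = 1 - measure_pmf.prob (PP h p) {f. \<not> ?Q w f}"
      using measure_pmf.prob_compl[of "{f. \<not> ?Q w f}" "PP h p"] by simp
    then show "measure_pmf.prob (PP h p) {f. ?Q w f} = 1 - p^2 * (1 - p)" using e by simp
  qed
  also have "\<dots> = (1 - p^2 * (1 - p)) ^ card ?I" by simp
  also have "\<dots> \<le> exp (- (p^2 * (1 - p))) ^ card ?I"
  proof (rule power_mono)
    have "p^2 * (1 - p) \<le> 1 * 1" using assms by (intro mult_mono) (auto simp: power_le_one)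
    then show "0 \<le> 1 - p^2 * (1 - p)" by simp
    show "1 - p^2 * (1 - p) \<le> exp (- (p^2 * (1 - p)))" using exp_ge_add_one_self[of "- (p^2 * (1 - p))"] by simp
  qed
  also have "\<dots> = exp (- (p^2 * (1 - p) * real (card ?I)))" by (simp add: exp_of_nat_mult[symmetric] mult.commute)
  finally have c: "measure_pmf.prob (PP h p) (UNIV - Ev h M) \<le> exp (- (p^2 * (1 - p) * real (card ?I)))"
    unfolding compl .
  have "measure_pmf.prob (PP h p) (UNIV - Ev h M) = 1 - measure_pmf.prob (PP h p) (Ev h M)"
    using measure_pmf.prob_compl[of "Ev h M" "PP h p"] by simp
  then show ?thesis using c by linarith
qed

lemma pow_exp: assumes "0 \<le> p" "p \<le> 1" shows "(1 - p) ^ n \<le> exp (- p * real n)"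
proof -
  have "(1 - p) ^ n \<le> exp (- p) ^ n"
    by (rule power_mono) (use assms exp_ge_add_one_self[of "- p"] in auto)
  also have "\<dots> = exp (- p * real n)" by (simp add: exp_of_nat_mult[symmetric] mult.commute)
  finally show ?thesis .
qed

lemma sparse_bound:
  assumes "0 \<le> p" "p \<le> 1"
  shows "measure_pmf.prob (T h p) {S. smooth_fan S} \<le> p + 2 * exp (- p * (real (card (Piv h 4)) - 1))"
proof -
  define X where "X = Piv h 4 - {(1,0)}"
  define rf where "rf = (\<lambda>z::int\<times>int. (fst z, - snd z))"
  define Y where "Y = rf ` X"
  have XR: "X \<subseteq> rays_upto h" unfolding X_def Piv_def by auto
  have XA: "fst x > 0 \<and> snd x > 0" if "x \<in> X" for x
  proof -
    have x: "x \<in> Piv h 4" "x \<noteq> (1,0)" using that unfolding X_def by auto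
    note P = Piv_facts[OF x(1)]
    have "snd x \<noteq> 0"
    proof
      assume s0: "snd x = 0"
      then have "gcd (fst x) 0 = 1" using P(4) unfolding primitive_def by simp
      then have "fst x = 1" using P(1) by simp
      then show False using s0 x(2) by (simp add: prod_eq_iff)
    qed
    then show ?thesis using P by auto
  qed
  have YR: "Y \<subseteq> rays_upto h"
  proof
    fix y assume "y \<in> Y"
    then obtain x where x: "x \<in> X" "y = rf x" unfolding Y_def by auto
    have "x \<in> rays_upto h" using x XR by auto
    then show "y \<in> rays_upto h" unfolding x(2) rf_def rays_upto_def primitive_def maxnorm_def by simp
  qed
  have YB: "fst y > 0 \<and> snd y < 0" if "y \<in> Y" for y
    using that XA unfolding Y_def rf_def by auto
  have fX: "finite X" using XR finite_R finite_subset by blast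
  have cY: "card Y = card X" unfolding Y_def by (rule card_image) (auto simp: inj_on_def rf_def prod_eq_iff)
  have cX: "real (card X) \<ge> real (card (Piv h 4)) - 1"
  proof -
    have "card (Piv h 4) \<le> card (insert (1,0) X)"
      by (rule card_mono) (use fX in \<open>auto simp: X_def\<close>)
    also have "\<dots> \<le> card X + 1" using fX by (simp add: card_insert_if)
    finally show ?thesis by simp
  qed
  define E1 where "E1 = {f::int\<times>int\<Rightarrow>bool. (1::int,0::int) \<in> rays_upto h \<and> f (1::int,0::int)}"
  define E2 where "E2 = {f::int\<times>int\<Rightarrow>bool. \<forall>x\<in>X. f x = False}"
  define E3 where "E3 = {f::int\<times>int\<Rightarrow>bool. \<forall>x\<in>Y. f x = False}"
  have sub: "{f. {u \<in> rays_upto h. f u} \<in> {S. smooth_fan S}} \<subseteq> E1 \<union> E2 \<union> E3"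
  proof
    fix f assume f: "f \<in> {f. {u \<in> rays_upto h. f u} \<in> {S. smooth_fan S}}"
    show "f \<in> E1 \<union> E2 \<union> E3"
    proof (rule ccontr)
      assume "f \<notin> E1 \<union> E2 \<union> E3"
      then have n1: "(1,0) \<notin> {u \<in> rays_upto h. f u}" and n2: "\<exists>x\<in>X. f x" and n3: "\<exists>y\<in>Y. f y"
        unfolding E1_def E2_def E3_def by auto
      obtain x where x: "x \<in> X" "f x" using n2 by blast
      obtain y where y: "y \<in> Y" "f y" using n3 by blast
      have "\<not> smooth_fan {u \<in> rays_upto h. f u}"
      proof (rule sparse_nonsmooth[OF _ _ n1])
        show "finite {u \<in> rays_upto h. f u}" using finite_R by simp
        show "x \<in> {u \<in> rays_upto h. f u}" "y \<in> {u \<in> rays_upto h. f u}" using x y XR YR by auto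
        show "fst x > 0" "snd x > 0" using XA[OF x(1)] by auto
        show "fst y > 0" "snd y < 0" using YB[OF y(1)] by auto
      qed auto
      then show False using f by simp
    qed
  qed
  have p1: "measure_pmf.prob (PP h p) E1 \<le> p"
  proof (cases "(1::int,0::int) \<in> rays_upto h")
    case True
    then have "E1 = {f. \<forall>x\<in>{(1,0)}. f x = True}" unfolding E1_def by auto
    then show ?thesis unfolding PP_def using prob_coords[OF finite_R _ assms, where c="\<lambda>_. True" and X="{(1,0)}"] True by simp
  next
    case False
    then have "E1 = {}" unfolding E1_def by auto
    then show ?thesis using assms by simp
  qed
  have p2: "measure_pmf.prob (PP h p) E2 \<le> exp (- p * real (card X))"
    unfolding E2_def PP_def using prob_coords[OF finite_R XR assms, where c="\<lambda>_. False"] pow_exp[OF assms, of "card X"] by simp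
  have p3: "measure_pmf.prob (PP h p) E3 \<le> exp (- p * real (card X))"
    unfolding E3_def PP_def using prob_coords[OF finite_R YR assms, where c="\<lambda>_. False"] pow_exp[OF assms, of "card Y"] cY by simp
  have "measure_pmf.prob (T h p) {S. smooth_fan S} \<le> measure_pmf.prob (PP h p) (E1 \<union> E2 \<union> E3)"
    unfolding probT by (rule prob_mono_PP[OF sub])
  also have "\<dots> \<le> measure_pmf.prob (PP h p) (E1 \<union> E2) + measure_pmf.prob (PP h p) E3"
    by (rule measure_Un_le) simp_all
  also have "\<dots> \<le> measure_pmf.prob (PP h p) E1 + measure_pmf.prob (PP h p) E2 + measure_pmf.prob (PP h p) E3"
    using measure_Un_le[of E1 "measure_pmf (PP h p)" E2] by simp
  also have "\<dots> \<le> p + 2 * exp (- p * real (card X))" using p1 p2 p3 by simp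
  also have "\<dots> \<le> p + 2 * exp (- p * (real (card (Piv h 4)) - 1))"
  proof -
    have "- p * real (card X) \<le> - p * (real (card (Piv h 4)) - 1)"
      using cX assms(1) by (simp add: mult_left_mono)
    then show ?thesis by simp
  qed
  finally show ?thesis .
qed


lemma exp_small:
  fixes e t :: real
  assumes "e > 0" "t \<ge> 1 / e"
  shows "exp (- t) < e"
proof -
  have "1 / e > 0" using assms(1) by simp
  then have t0: "t > 0" using assms by linarith
  have "exp t \<ge> 1 + t" by (rule exp_ge_add_one_self)
  then have "exp t > 1 / e" using assms by linarith
  then have "1 / exp t < e" using assms by (simp add: divide_less_eq field_simps)
  then show ?thesis by (simp add: exp_minus field_simps)
qed

lemma succ_inf_core:
  assumes "succ f g" "\<And>h. 0 \<le> f h" "\<And>h. h \<ge> 1 \<Longrightarrow> g h > 0" "Z > 0"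
  shows "eventually (\<lambda>h. f h / g h \<ge> Z) sequentially"
proof -
  have ne: "eventually (\<lambda>h. f h \<noteq> 0) sequentially"
    and t: "((\<lambda>h. g h / f h) \<longlongrightarrow> 0) sequentially"
    using assms(1) unfolding succ_def prec_def by auto
  have "eventually (\<lambda>h. dist (g h / f h) 0 < 1 / Z) sequentially"
    using t assms(4) by (simp add: tendsto_iff)
  moreover have "eventually (\<lambda>h. h \<ge> 1) sequentially" by (rule eventually_ge_at_top)
  ultimately show ?thesis using ne
  proof eventually_elim
    case (elim h)
    have fp: "f h > 0" using elim(3) assms(2)[of h] by (simp add: less_le)
    have gp: "g h > 0" using assms(3) elim(2) by simp
    have "g h / f h < 1 / Z" using elim(1) fp gp by simp
    then have "inverse (f h / g h) < inverse Z" by (simp add: divide_inverse mult.commute)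
    then have "Z < f h / g h" using fp gp assms(4)
      by (subst (asm) inverse_less_iff_less) simp_all
    then show ?case by simp
  qed
qed

lemma succ_inf2:
  assumes "succ f (\<lambda>h. 1 / real h ^ 2)" "\<And>h. 0 \<le> f h"
  shows "eventually (\<lambda>h. f h * real h ^ 2 \<ge> Z) sequentially"
proof -
  have "eventually (\<lambda>h. f h / (1 / real h ^ 2) \<ge> max Z 1) sequentially"
    by (rule succ_inf_core[OF assms]) auto
  then show ?thesis by (rule eventually_mono) simp
qed

lemma succ_inf1:
  assumes "succ f (\<lambda>h. 1 / real h)" "\<And>h. 0 \<le> f h"
  shows "eventually (\<lambda>h. f h * real h \<ge> Z) sequentially"
proof -
  have "eventually (\<lambda>h. f h / (1 / real h) \<ge> max Z 1) sequentially"
    by (rule succ_inf_core[OF assms]) auto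
  then show ?thesis by (rule eventually_mono) simp
qed

lemma prec_to0:
  assumes "prec f (\<lambda>h. 1 / real h ^ 2)"
  shows "((\<lambda>h. f h * real h ^ 2) \<longlongrightarrow> 0) sequentially"
proof -
  have "((\<lambda>h. f h / (1 / real h ^ 2)) \<longlongrightarrow> 0) sequentially" using assms unfolding prec_def by auto
  moreover have "f h / (1 / real h ^ 2) = f h * real h ^ 2" for h by simp
  ultimately show ?thesis by simp
qed

lemma div_lower:
  assumes "M > 0"
  shows "real (nat (int h div M)) \<ge> real h / real_of_int M - 1"
proof -
  have x0: "int h div M \<ge> 0" using assms by (simp add: pos_imp_zdiv_nonneg_iff)
  have e: "int h = M * (int h div M) + int h mod M" by simp
  have "int h mod M < M" using assms by simp
  then have "int h < M * (int h div M) + M" using e by linarith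
  then have "real h < real_of_int M * real_of_int (int h div M) + real_of_int M"
    by (metis of_int_add of_int_less_iff of_int_mult of_int_of_nat_eq)
  then have "real h / real_of_int M < real_of_int (int h div M) + 1" using assms
    by (simp add: field_simps)
  then show ?thesis using x0 by simp
qed

lemma card_Piv_ev:
  assumes "M \<ge> 4"
  shows "eventually (\<lambda>h. real (card (Piv h M)) \<ge> real h ^ 2 / (64 * (real_of_int M)^2)) sequentially"
proof -
  define m where "m = real_of_int M"
  have m4: "m \<ge> 4" using assms unfolding m_def by simp
  have "eventually (\<lambda>h. real h \<ge> 2 * m + 32 * m^2) sequentially"
    by (rule eventually_sequentiallyI[of "nat \<lceil>2 * m + 32 * m^2\<rceil>"]) linarith
  then show ?thesis
  proof eventually_elim
    case (elim h)
    have "m^2 \<ge> 0" by simp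
    then have h0: "real h \<ge> 2 * m" using elim by linarith
    have "real (nat (int h div M)) \<ge> real h / m - 1" using div_lower[of M h] assms unfolding m_def by simp
    moreover have "real h / m - 1 \<ge> real h / (2 * m)" using h0 m4 by (simp add: field_simps)
    ultimately have H: "real (nat (int h div M)) \<ge> real h / (2 * m)" by linarith
    have H2: "(real (nat (int h div M)))^2 \<ge> (real h / (2 * m))^2"
      using H m4 by (intro power_mono) auto
    have "real (card (Piv h M)) \<ge> (real h / (2 * m))^2 / 8 - 1/2"
      using card_Piv[of M h] H2 assms by simp
    moreover have "(real h / (2 * m))^2 / 8 - 1/2 \<ge> real h ^ 2 / (64 * m^2)"
    proof -
      have "real h \<ge> 32 * m^2" using elim m4 by simp
      moreover have "(4::real)^2 \<le> m^2" using m4 by (intro power_mono) auto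
      ultimately have h1: "real h \<ge> 1" by simp
      have "real h * real h \<ge> real h * 1" using h1 by (intro mult_left_mono) auto
      then have "real h ^ 2 \<ge> 32 * m^2" using \<open>real h \<ge> 32 * m^2\<close> by (simp add: power2_eq_square)
      then have "real h ^ 2 / (64 * m^2) \<ge> 1/2" using m4 by (simp add: field_simps)
      moreover have "(real h / (2 * m))^2 / 8 = 2 * (real h ^ 2 / (64 * m^2))"
        by (simp add: power_divide field_simps power2_eq_square)
      ultimately show ?thesis by linarith
    qed
    ultimately show ?case unfolding m_def by linarith
  qed
qed

lemma smooth_le_Ev:
  assumes "M \<ge> 4" "0 \<le> p" "p \<le> 1"
  shows "measure_pmf.prob (T h p) {S. smooth_fan S} \<le> 1 - measure_pmf.prob (PP h p) (Ev h M)"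
proof -
  have "{f. {u \<in> rays_upto h. f u} \<in> {S. smooth_fan S}} \<subseteq> UNIV - Ev h M"
  proof
    fix f assume f: "f \<in> {f. {u \<in> rays_upto h. f u} \<in> {S. smooth_fan S}}"
    have "f \<notin> Ev h M"
    proof
      assume "f \<in> Ev h M"
      then obtain u v where c: "cone2 {u \<in> rays_upto h. f u} u v" and si: "sing_index u v \<ge> 2 * M - 1"
        using Ev_witness[OF assms(1)] by blast
      have "sing_index u v \<noteq> 1" using si assms(1) by linarith
      moreover have "smooth_fan {u \<in> rays_upto h. f u}" using f by simp
      ultimately show False using c unfolding smooth_fan_def by blast
    qed
    then show "f \<in> UNIV - Ev h M" by simp
  qed
  then have "measure_pmf.prob (T h p) {S. smooth_fan S} \<le> measure_pmf.prob (PP h p) (UNIV - Ev h M)"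
    unfolding probT by (rule prob_mono_PP)
  also have "\<dots> = 1 - measure_pmf.prob (PP h p) (Ev h M)"
    using measure_pmf.prob_compl[of "Ev h M" "PP h p"] by simp
  finally show ?thesis .
qed

lemma sing_ge_Ev:
  assumes "M \<ge> 4" "int K \<le> 2 * M - 1"
  shows "measure_pmf.prob (T h p) {S. has_sing_index_ge S K} \<ge> measure_pmf.prob (PP h p) (Ev h M)"
proof -
  have "Ev h M \<subseteq> {f. {u \<in> rays_upto h. f u} \<in> {S. has_sing_index_ge S K}}"
  proof
    fix f assume "f \<in> Ev h M"
    then obtain u v where c: "cone2 {u \<in> rays_upto h. f u} u v" and si: "sing_index u v \<ge> 2 * M - 1"
      using Ev_witness[OF assms(1)] by blast
    have "sing_index u v \<ge> int K" using si assms(2) by linarith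
    then have "has_sing_index_ge {u \<in> rays_upto h. f u} K" unfolding has_sing_index_ge_def using c by blast
    then show "f \<in> {f. {u \<in> rays_upto h. f u} \<in> {S. has_sing_index_ge S K}}" by simp
  qed
  then show ?thesis unfolding probT by (rule prob_mono_PP)
qed

lemma part2_point:
  fixes p q N x c e P :: real
  assumes "0 \<le> q" "q \<le> 1" "p = 1 - q" "e > 0" "c > 0" "N \<ge> c * x^2"
    "p * x^2 \<ge> (1 / e + 1) / c" "q * x^2 \<ge> 1 / (e^3 * c)"
    "P \<le> p + 2 * exp (- p * (N - 1))" "P \<le> exp (- (p^2 * (1 - p) * N))"
  shows "P < 3 * e"
proof (cases "p \<le> e")
  case True
  have p0: "0 \<le> p" "p \<le> 1" using assms by auto
  have "p * N \<ge> p * (c * x^2)" by (rule mult_left_mono[OF assms(6) p0(1)])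
  also have "p * (c * x^2) = c * (p * x^2)" by simp
  also have "c * (p * x^2) \<ge> c * ((1 / e + 1) / c)" using assms(5,7) by (intro mult_left_mono) auto
  also have "c * ((1 / e + 1) / c) = 1 / e + 1" using assms(5) by simp
  finally have "p * N \<ge> 1 / e + 1" .
  then have "p * (N - 1) \<ge> 1 / e" using p0 by (simp add: algebra_simps)
  then have "exp (- (p * (N - 1))) < e" by (rule exp_small[OF assms(4)])
  then show ?thesis using assms(9) True by simp
next
  case False
  have q0: "0 \<le> q" using assms by simp
  have "p^2 \<ge> e^2" using False assms(4) by (intro power_mono) auto
  moreover have "q * N \<ge> q * (c * x^2)" by (rule mult_left_mono[OF assms(6) q0])
  ultimately have "p^2 * (q * N) \<ge> e^2 * (q * (c * x^2))"
    using q0 assms(5) by (rule_tac mult_mono) auto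
  also have "e^2 * (q * (c * x^2)) = (e^2 * c) * (q * x^2)" by simp
  also have "(e^2 * c) * (q * x^2) \<ge> (e^2 * c) * (1 / (e^3 * c))"
    using assms(4,5,8) by (intro mult_left_mono) auto
  also have "(e^2 * c) * (1 / (e^3 * c)) = 1 / e" using assms(4,5) by (simp add: field_simps power3_eq_cube power2_eq_square)
  finally have a: "p^2 * (q * N) \<ge> 1 / e" .
  have e1: "1 - p = q" using assms(3) by simp
  have eq: "p^2 * (1 - p) * N = p^2 * (q * N)" by (simp only: e1 mult.assoc)
  have "p^2 * (1 - p) * N \<ge> 1 / e" using a by (simp only: eq)
  then have "exp (- (p^2 * (1 - p) * N)) < e" by (rule exp_small[OF assms(4)])
  then show ?thesis using assms(10,4) by simp
qed

lemma part3_point: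
  fixes p q N x c e :: real
  assumes "0 \<le> q" "q \<le> 1" "p = 1 - q" "e > 0" "c > 0" "N \<ge> c * x^2"
    "p * x \<ge> 2 / (c * e) + 1" "q * x^2 \<ge> 4 / (c * e)"
  shows "p^2 * (1 - p) * N \<ge> 1 / e"
proof -
  have p0: "0 \<le> p" using assms by simp
  have "q * N \<ge> q * (c * x^2)" by (rule mult_left_mono[OF assms(6,1)])
  then have qN: "p^2 * (q * N) \<ge> p^2 * (q * (c * x^2))" by (rule mult_left_mono) auto
  have ce: "c * e > 0" using assms by simp
  consider "q \<ge> 1/2" | "q < 1/2" by linarith
  then have "p^2 * (q * (c * x^2)) \<ge> 1 / e"
  proof cases
    case 1
    have px1: "p * x \<ge> 1" using assms(7) ce by (smt (verit) divide_pos_pos)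
    have "(p * x) * 1 \<le> (p * x) * (p * x)" by (rule mult_left_mono[OF px1]) (use px1 in linarith)
    then have "(p * x)^2 \<ge> (p * x) * 1" by (simp add: power2_eq_square)
    then have px: "(p * x)^2 \<ge> 2 / (c * e)" using assms(7) by linarith
    have "p^2 * (q * (c * x^2)) = q * c * (p * x)^2" by (simp add: power_mult_distrib)
    also have "\<dots> \<ge> (1/2) * c * (2 / (c * e))"
      using 1 px assms(5) ce by (intro mult_mono) auto
    also have "(1/2) * c * (2 / (c * e)) = 1 / e" using assms(4,5) by (simp add: field_simps)
    finally show ?thesis .
  next
    case 2
    have "p \<ge> 1/2" using 2 assms(3) by simp
    then have "p^2 \<ge> (1/2)^2" by (intro power_mono) auto
    then have p2: "p^2 \<ge> 1/4" by (simp add: power2_eq_square)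
    have "p^2 * (q * (c * x^2)) = p^2 * c * (q * x^2)" by simp
    also have "\<dots> \<ge> (1/4) * c * (4 / (c * e))"
      using p2 assms(8,5) ce by (intro mult_mono) auto
    also have "(1/4) * c * (4 / (c * e)) = 1 / e" using assms(4,5) by (simp add: field_simps)
    finally show ?thesis .
  qed
  with qN have "p^2 * (q * N) \<ge> 1 / e" by linarith
  moreover have e1: "1 - p = q" using assms(3) by simp
  have eq: "p^2 * (1 - p) * N = p^2 * (q * N)" by (simp only: e1 mult.assoc)
  ultimately show ?thesis by (simp only: eq)
qed

lemma cardR9: "h \<ge> 1 \<Longrightarrow> real (card (rays_upto h)) \<le> 9 * real h ^ 2"
proof -
  assume h: "h \<ge> 1"
  have "card (rays_upto h) \<le> (2 * h + 1)^2" by (rule card_R)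
  also have "(2 * h + 1)^2 \<le> (3 * h)^2" using h by (intro power_mono) auto
  finally have "real (card (rays_upto h)) \<le> real ((3 * h)^2)" by (simp only: of_nat_le_iff)
  then show ?thesis by (simp add: power_mult_distrib)
qed

lemma part1_lim:
  assumes q0: "\<And>h. 0 \<le> qq h" "\<And>h. qq h \<le> 1"
    and pre: "prec qq (\<lambda>h. 1 / real h ^ 2)"
    and low: "\<And>h. measure_pmf.prob (T h (1 - q h)) {S. smooth_fan S} \<ge> 1 - real (card (rays_upto h)) * qq h"
  shows "((\<lambda>h. measure_pmf.prob (T h (1 - q h)) {S. smooth_fan S}) \<longlongrightarrow> 1) sequentially"
proof (rule tendsto_sandwich[where f = "\<lambda>h. 1 - 9 * (qq h * real h ^ 2)" and h = "\<lambda>_. 1"])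
  let ?P = "\<lambda>h. measure_pmf.prob (T h (1 - q h)) {S. smooth_fan S}"
  show "eventually (\<lambda>h. ?P h \<le> 1) sequentially" by simp
  show "((\<lambda>h. 1) \<longlongrightarrow> 1) sequentially" by simp
  have "eventually (\<lambda>h. h \<ge> 1) sequentially" by (rule eventually_ge_at_top)
  then show "eventually (\<lambda>h. 1 - 9 * (qq h * real h ^ 2) \<le> ?P h) sequentially"
  proof eventually_elim
    case (elim h)
    have "real (card (rays_upto h)) * qq h \<le> 9 * real h ^ 2 * qq h"
      using cardR9[OF elim] q0(1)[of h] by (rule mult_right_mono)
    then show ?case using low[of h] by (simp add: algebra_simps)
  qed
  have "((\<lambda>h. 1 - 9 * (qq h * real h ^ 2)) \<longlongrightarrow> 1 - 9 * 0) sequentially"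
    by (intro tendsto_intros prec_to0[OF pre])
  then show "((\<lambda>h. 1 - 9 * (qq h * real h ^ 2)) \<longlongrightarrow> 1) sequentially" by simp
qed

theorem theorem1:
  fixes q :: "nat \<Rightarrow> real"
  assumes q_range: "\<And>h. 0 \<le> q h \<and> q h \<le> 1"
  shows
   "((prec q (\<lambda>h. 1 / real h ^ 2) \<or> prec (\<lambda>h. 1 - q h) (\<lambda>h. 1 / real h ^ 2)) \<longrightarrow>
       whp (\<lambda>h. measure_pmf.prob (T h (1 - q h)) {S. smooth_fan S}))
    \<and> ((succ q (\<lambda>h. 1 / real h ^ 2) \<and> succ (\<lambda>h. 1 - q h) (\<lambda>h. 1 / real h ^ 2)) \<longrightarrow>
       whp (\<lambda>h. measure_pmf.prob (T h (1 - q h)) {S. \<not> smooth_fan S}))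
    \<and> (\<forall>k::nat. k > 1 \<longrightarrow>
        (succ (\<lambda>h. 1 - q h) (\<lambda>h. 1 / real h) \<and> succ q (\<lambda>h. 1 / real h ^ 2)) \<longrightarrow>
        whp (\<lambda>h. measure_pmf.prob (T h (1 - q h)) {S. has_sing_index_ge S k}))"
proof (intro conjI impI allI)
  have q0: "\<And>h. 0 \<le> q h" and q1: "\<And>h. q h \<le> 1" using q_range by auto
  have p0: "\<And>h. 0 \<le> 1 - q h" and p1: "\<And>h. 1 - q h \<le> 1" using q_range by auto
  let ?P = "\<lambda>h. measure_pmf.prob (T h (1 - q h)) {S. smooth_fan S}"
  {
    assume A: "prec q (\<lambda>h. 1 / real h ^ 2) \<or> prec (\<lambda>h. 1 - q h) (\<lambda>h. 1 / real h ^ 2)"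
    then show "whp ?P"
    proof
      assume pre: "prec q (\<lambda>h. 1 / real h ^ 2)"
      have "?P h \<ge> 1 - real (card (rays_upto h)) * q h" for h
        using part1_full[OF p0 p1, of h] by simp
      then show "whp ?P" unfolding whp_def by (rule part1_lim[OF q0 q1 pre])
    next
      assume pre: "prec (\<lambda>h. 1 - q h) (\<lambda>h. 1 / real h ^ 2)"
      have "?P h \<ge> 1 - real (card (rays_upto h)) * (1 - q h)" for h
        using part1_empty[OF p0 p1, of h] by simp
      then show "whp ?P" unfolding whp_def by (rule part1_lim[OF p0 p1 pre])
    qed
  }
  {
    assume B: "succ q (\<lambda>h. 1 / real h ^ 2) \<and> succ (\<lambda>h. 1 - q h) (\<lambda>h. 1 / real h ^ 2)"
    have P0: "(?P \<longlongrightarrow> 0) sequentially"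
    proof (rule order_tendstoI)
      fix a :: real assume "a < 0"
      then show "eventually (\<lambda>h. a < ?P h) sequentially" by (intro always_eventually) (auto intro: less_le_trans)
    next
      fix a :: real assume a: "0 < a"
      define e where "e = a / 4"
      define c where "c = (1::real) / 1024"
      have e0: "e > 0" using a unfolding e_def by simp
      have c0: "c > 0" unfolding c_def by simp
      have ev1: "eventually (\<lambda>h. real (card (Piv h 4)) \<ge> c * real h ^ 2) sequentially"
        using card_Piv_ev[of 4, OF order.refl]
      proof (rule eventually_mono)
        fix h assume "real h ^ 2 / (64 * (real_of_int 4)^2) \<le> real (card (Piv h 4))"
        moreover have "real h ^ 2 / (64 * (real_of_int 4)^2) = c * real h ^ 2" unfolding c_def by simp
        ultimately show "c * real h ^ 2 \<le> real (card (Piv h 4))" by linarith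
      qed
      have ev2: "eventually (\<lambda>h. (1 - q h) * real h ^ 2 \<ge> (1 / e + 1) / c) sequentially"
        using B p0 by (intro succ_inf2) auto
      have ev3: "eventually (\<lambda>h. q h * real h ^ 2 \<ge> 1 / (e^3 * c)) sequentially"
        using B q0 by (intro succ_inf2) auto
      from ev1 ev2 ev3 show "eventually (\<lambda>h. ?P h < a) sequentially"
      proof eventually_elim
        case (elim h)
        have s1: "?P h \<le> (1 - q h) + 2 * exp (- (1 - q h) * (real (card (Piv h 4)) - 1))"
          by (rule sparse_bound[OF p0 p1])
        have "?P h \<le> 1 - measure_pmf.prob (PP h (1 - q h)) (Ev h 4)"
          by (rule smooth_le_Ev[OF _ p0 p1]) simp
        also have "\<dots> \<le> exp (- ((1 - q h)^2 * (1 - (1 - q h)) * real (card (Piv h 4))))"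
          using dense_bound[of 4 "1 - q h" h] p0[of h] p1[of h] by simp
        finally have s2: "?P h \<le> exp (- ((1 - q h)^2 * (1 - (1 - q h)) * real (card (Piv h 4))))" .
        have "?P h < 3 * e"
          by (rule part2_point[OF q0 q1 refl e0 c0 elim(1) elim(2) elim(3) s1 s2])
        then show ?case using a unfolding e_def by linarith
      qed
    qed
    have compl: "measure_pmf.prob (T h (1 - q h)) {S. \<not> smooth_fan S} = 1 - ?P h" for h
    proof -
      have "{S. \<not> smooth_fan S} = UNIV - {S. smooth_fan S}" by auto
      then show ?thesis using measure_pmf.prob_compl[of "{S. smooth_fan S}" "T h (1 - q h)"] by simp
    qed
    have "((\<lambda>h. 1 - ?P h) \<longlongrightarrow> 1 - 0) sequentially" by (intro tendsto_intros P0)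
    then show "whp (\<lambda>h. measure_pmf.prob (T h (1 - q h)) {S. \<not> smooth_fan S})"
      unfolding whp_def compl by simp
  }
  {
    fix k :: nat
    assume k: "k > 1"
    assume C: "succ (\<lambda>h. 1 - q h) (\<lambda>h. 1 / real h) \<and> succ q (\<lambda>h. 1 / real h ^ 2)"
    define M where "M = int k + 4"
    have M4: "M \<ge> 4" and Mk: "int k \<le> 2 * M - 1" unfolding M_def by auto
    let ?Q = "\<lambda>h. measure_pmf.prob (T h (1 - q h)) {S. has_sing_index_ge S k}"
    show "whp ?Q" unfolding whp_def
    proof (rule order_tendstoI)
      fix a :: real assume "1 < a"
      then show "eventually (\<lambda>h. ?Q h < a) sequentially"
        by (intro always_eventually) (auto intro: le_less_trans)
    next
      fix a :: real assume a: "a < 1"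
      define e where "e = 1 - a"
      define c where "c = 1 / (64 * (real_of_int M)^2)"
      have e0: "e > 0" using a unfolding e_def by simp
      have c0: "c > 0" unfolding c_def using M4 by simp
      have ev1: "eventually (\<lambda>h. real (card (Piv h M)) \<ge> c * real h ^ 2) sequentially"
        using card_Piv_ev[OF M4]
      proof (rule eventually_mono)
        fix h assume "real h ^ 2 / (64 * (real_of_int M)^2) \<le> real (card (Piv h M))"
        moreover have "real h ^ 2 / (64 * (real_of_int M)^2) = c * real h ^ 2" unfolding c_def by simp
        ultimately show "c * real h ^ 2 \<le> real (card (Piv h M))" by simp
      qed
      have ev2: "eventually (\<lambda>h. (1 - q h) * real h \<ge> 2 / (c * e) + 1) sequentially"
        using C p0 by (intro succ_inf1) auto
      have ev3: "eventually (\<lambda>h. q h * real h ^ 2 \<ge> 4 / (c * e)) sequentially"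
        using C q0 by (intro succ_inf2) auto
      from ev1 ev2 ev3 show "eventually (\<lambda>h. a < ?Q h) sequentially"
      proof eventually_elim
        case (elim h)
        have t: "(1 - q h)^2 * (1 - (1 - q h)) * real (card (Piv h M)) \<ge> 1 / e"
          by (rule part3_point[OF q0 q1 refl e0 c0 elim(1) elim(2) elim(3)])
        have "exp (- ((1 - q h)^2 * (1 - (1 - q h)) * real (card (Piv h M)))) < e"
          by (rule exp_small[OF e0 t])
        moreover have "?Q h \<ge> measure_pmf.prob (PP h (1 - q h)) (Ev h M)"
          by (rule sing_ge_Ev[OF M4 Mk])
        moreover have "measure_pmf.prob (PP h (1 - q h)) (Ev h M) \<ge>
            1 - exp (- ((1 - q h)^2 * (1 - (1 - q h)) * real (card (Piv h M))))"
          by (rule dense_bound[OF M4 p0 p1])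
        ultimately show ?case unfolding e_def by linarith
      qed
    qed
  }
qed

end
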